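(* For integers $a_1\ge1$, $a_2\ge0$ and $s\ge1$, \[ G(a_1,a_2,s)=G(a_1-1,a_2,s)+G(a_1-1,a_2,s-1)+G(a_1,a_2-1,s)+G(a_1,a_2-1,s-1). \]
   Context: For integers $a_1,a_2,s$ with $a=a_1+a_2$, $G(a_1,a_2,s)=\sum_m N_m$, the sum over integers $m$ such that $a_1-m,\ a_2-(s-m),\ m,\ s-m$ are all nonnegative (an empty sum is $0$; in particular $G=0$ whenever $a_2<0$ or $s>a$), where $N_m$ is the number of permutations $\pi$ of $[a]$ that are decreasing within each of four consecutive blocks of positions of lengths $a_1-m,\ a_2-(s-m),\ m,\ s-m$ (in this order; arbitrary between blocks), and have no fixed point ($\pi_i=i$) in the first two blocks. *)

theory Defs
  imports "HOL-Combinatorics.Permutations"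
begin

definition dec_on :: "(nat \<Rightarrow> nat) \<Rightarrow> nat \<Rightarrow> nat \<Rightarrow> bool" where
  "dec_on p lo hi \<longleftrightarrow> (\<forall>i j. lo \<le> i \<and> i < j \<and> j \<le> hi \<longrightarrow> p j < p i)"

definition Nblk :: "nat \<Rightarrow> nat \<Rightarrow> nat \<Rightarrow> nat \<Rightarrow> nat" where
  "Nblk L1 L2 L3 L4 = card {p. p permutes {1..L1+L2+L3+L4}
      \<and> dec_on p 1 L1
      \<and> dec_on p (L1+1) (L1+L2)
      \<and> dec_on p (L1+L2+1) (L1+L2+L3)
      \<and> dec_on p (L1+L2+L3+1) (L1+L2+L3+L4)
      \<and> (\<forall>i\<in>{1..L1+L2}. p i \<noteq> i)}"

definition G :: "int \<Rightarrow> int \<Rightarrow> int \<Rightarrow> nat" where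
  "G a1 a2 s = (\<Sum>m \<in> {m::int. 0 \<le> a1 - m \<and> 0 \<le> a2 - (s - m) \<and> 0 \<le> m \<and> 0 \<le> s - m}.
      Nblk (nat (a1 - m)) (nat (a2 - (s - m))) (nat m) (nat (s - m)))"

end

theory Submission
  imports Defs "HOL-Combinatorics.Multiset_Permutations"
begin


definition W :: "'a multiset \<Rightarrow> 'a list set" where
  "W B = {xs. mset xs = B}"

lemma W_eq: "W B = permutations_of_multiset B"
  by (simp add: W_def permutations_of_multiset_def)

lemma finite_W[simp]: "finite (W B)"
  by (simp add: W_eq)

lemma finite_W_filter[simp]: "finite {u\<in>W B. P u}"
  by simp

definition hit :: "'a \<Rightarrow> nat \<Rightarrow> 'a list \<Rightarrow> bool" where
  "hit k A u \<longleftrightarrow> (\<exists>s\<le>length u. s + count_list (take s u) k = A)"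

lemma hit_Nil[simp]: "hit k A [] \<longleftrightarrow> A = 0"
  by (simp add: hit_def)

lemma hit_Cons:
  "hit k A (c#u) \<longleftrightarrow> A = 0 \<or> ((if c = k then 2 else 1) \<le> A \<and> hit k (A - (if c = k then 2 else 1)) u)"
proof
  assume "hit k A (c#u)"
  then obtain s where s: "s \<le> length (c#u)" "s + count_list (take s (c#u)) k = A"
    by (auto simp: hit_def)
  show "A = 0 \<or> ((if c = k then 2 else 1) \<le> A \<and> hit k (A - (if c = k then 2 else 1)) u)"
  proof (cases s)
    case 0 then show ?thesis using s by simp
  next
    case (Suc s')
    have "s' \<le> length u" using s Suc by simp
    moreover have "s' + count_list (take s' u) k = A - (if c = k then 2 else 1)"
      using s Suc by auto
    moreover have "(if c = k then 2 else 1) \<le> A" using s Suc by auto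
    ultimately show ?thesis unfolding hit_def by blast
  qed
next
  assume h: "A = 0 \<or> ((if c = k then 2 else 1) \<le> A \<and> hit k (A - (if c = k then 2 else 1)) u)"
  show "hit k A (c#u)"
  proof (cases "A = 0")
    case True then show ?thesis unfolding hit_def by (intro exI[of _ 0]) simp
  next
    case False
    with h obtain s where s: "s \<le> length u" "s + count_list (take s u) k = A - (if c = k then 2 else 1)"
      "(if c = k then 2 else 1) \<le> A" by (auto simp: hit_def)
    show ?thesis unfolding hit_def
      by (rule exI[of _ "Suc s"]) (use s in \<open>auto split: if_splits\<close>)
  qed
qed

lemma hit_take:
  assumes "A \<le> l"
  shows "hit k A (take l u) \<longleftrightarrow> hit k A u"
proof
  assume "hit k A (take l u)"
  then obtain s where s: "s \<le> length (take l u)" "s + count_list (take s (take l u)) k = A"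
    by (auto simp: hit_def)
  then show "hit k A u" unfolding hit_def
    by (intro exI[of _ s]) (auto simp: min_def split: if_splits)
next
  assume "hit k A u"
  then obtain s where s: "s \<le> length u" "s + count_list (take s u) k = A"
    by (auto simp: hit_def)
  then have "s \<le> l" using assms by linarith
  then show "hit k A (take l u)" unfolding hit_def using s
    by (intro exI[of _ s]) (auto simp: min_def)
qed

lemma count_take_drop: "count_list (take s u) k + count_list (drop s u) k = count_list u k"
  by (metis append_take_drop_id count_list_append)

lemma hit_append_big:
  assumes "A = length p + count_list p k + count_list q k"
  shows "hit k A (p @ q) \<longleftrightarrow> hit k (count_list q k) q"
proof
  assume "hit k A (p @ q)"
  then obtain s where s: "s \<le> length (p@q)" "s + count_list (take s (p@q)) k = A"
    by (auto simp: hit_def)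
  show "hit k (count_list q k) q"
  proof (cases "s \<le> length p")
    case True
    have c: "count_list (take s p) k \<le> count_list p k"
      using count_take_drop[of s p k] by linarith
    have "s + count_list (take s p) k = A" using s True by simp
    then have "s = length p" "count_list q k = 0" using assms c True by linarith+
    then show ?thesis unfolding hit_def by (intro exI[of _ 0]) simp
  next
    case False
    define t where "t = s - length p"
    have "t \<le> length q" using s False by (simp add: t_def)
    moreover have "take s (p@q) = p @ take t q" using False by (simp add: t_def)
    ultimately show ?thesis using s assms False unfolding hit_def
      by (intro exI[of _ t]) (auto simp: t_def)
  qed
next
  assume "hit k (count_list q k) q"
  then obtain t where t: "t \<le> length q" "t + count_list (take t q) k = count_list q k"
    by (auto simp: hit_def)
  show "hit k A (p@q)" unfolding hit_def
    by (rule exI[of _ "length p + t"]) (use t assms in auto)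
qed

lemma hit_snoc:
  "hit k A (u @ [c]) \<longleftrightarrow> hit k A u \<or> A = length u + 1 + count_list (u @ [c]) k"
proof
  assume "hit k A (u @ [c])"
  then obtain s where s: "s \<le> length (u@[c])" "s + count_list (take s (u@[c])) k = A"
    by (auto simp: hit_def)
  show "hit k A u \<or> A = length u + 1 + count_list (u @ [c]) k"
  proof (cases "s \<le> length u")
    case True then show ?thesis using s unfolding hit_def by (intro disjI1 exI[of _ s]) auto
  next
    case False then have "s = length u + 1" using s by simp
    then show ?thesis using s by simp
  qed
next
  assume "hit k A u \<or> A = length u + 1 + count_list (u @ [c]) k"
  then show "hit k A (u @ [c])"
  proof
    assume "hit k A u"
    then obtain s where s: "s \<le> length u" "s + count_list (take s u) k = A"
      by (auto simp: hit_def)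
    then show ?thesis unfolding hit_def by (intro exI[of _ s]) auto
  next
    assume "A = length u + 1 + count_list (u @ [c]) k"
    then show ?thesis unfolding hit_def by (intro exI[of _ "length u + 1"]) simp
  qed
qed

lemma hit_rev:
  assumes "A \<le> length u + count_list u k"
  shows "hit k A (rev u) \<longleftrightarrow> hit k (length u + count_list u k - A) u"
proof -
  have key: "s + count_list (take s (rev u)) k = length u + count_list u k - ((length u - s) + count_list (take (length u - s) u) k)"
    if "s \<le> length u" for s
  proof -
    have "take s (rev u) = rev (drop (length u - s) u)" using that by (simp add: take_rev)
    then have "count_list (take s (rev u)) k = count_list (drop (length u - s) u) k" by simp
    moreover have "count_list (take (length u - s) u) k + count_list (drop (length u - s) u) k = count_list u k"
      by (rule count_take_drop)
    ultimately show ?thesis using that by linarith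
  qed
  have le: "(length u - s) + count_list (take (length u - s) u) k \<le> length u + count_list u k" for s
    using count_take_drop[of "length u - s" u k] by linarith
  show ?thesis
  proof
    assume "hit k A (rev u)"
    then obtain s where s: "s \<le> length u" "s + count_list (take s (rev u)) k = A"
      by (auto simp: hit_def)
    show "hit k (length u + count_list u k - A) u" unfolding hit_def
      by (rule exI[of _ "length u - s"]) (use s key[OF s(1)] le[of s] in auto)
  next
    assume "hit k (length u + count_list u k - A) u"
    then obtain t where t: "t \<le> length u" "t + count_list (take t u) k = length u + count_list u k - A"
      by (auto simp: hit_def)
    have "length u - (length u - t) = t" using t by simp
    then show "hit k A (rev u)" unfolding hit_def
      using key[of "length u - t"] t assms
      by (intro exI[of _ "length u - t"]) auto
  qed
qed

lemma count_list_W: "u \<in> W B \<Longrightarrow> count_list u k = count B k"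
  by (simp add: W_def count_mset[symmetric])

lemma length_W: "u \<in> W B \<Longrightarrow> length u = size B"
  by (metis W_def mem_Collect_eq size_mset)

lemma W_nonempty:
  assumes "B \<noteq> {#}"
  shows "{u\<in>W B. P u} = (\<Union>x\<in>set_mset B. (#) x ` {u\<in>W (B - {#x#}). P (x#u)})"
proof -
  have "W B = (\<Union>x\<in>set_mset B. (#) x ` W (B - {#x#}))"
    using permutations_of_multiset_nonempty[OF assms] by (simp add: W_eq)
  then show ?thesis by auto
qed

lemma card_cons_dec:
  assumes "B \<noteq> {#}"
  shows "card {u\<in>W B. P u} = (\<Sum>x\<in>set_mset B. card {u\<in>W (B - {#x#}). P (x#u)})"
proof -
  have "card {u\<in>W B. P u} = card (\<Union>x\<in>set_mset B. (#) x ` {u\<in>W (B - {#x#}). P (x#u)})"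
    using W_nonempty[OF assms] by simp
  also have "\<dots> = (\<Sum>x\<in>set_mset B. card ((#) x ` {u\<in>W (B - {#x#}). P (x#u)}))"
    by (rule card_UN_disjoint) auto
  also have "\<dots> = (\<Sum>x\<in>set_mset B. card {u\<in>W (B - {#x#}). P (x#u)})"
    by (intro sum.cong refl card_image) (auto simp: inj_on_def)
  finally show ?thesis .
qed

lemma card_rev:
  "card {u\<in>W B. P u} = card {u\<in>W B. P (rev u)}"
proof -
  have "rev ` {u\<in>W B. P (rev u)} = {u\<in>W B. P u}"
  proof
    show "rev ` {u\<in>W B. P (rev u)} \<subseteq> {u\<in>W B. P u}" by (auto simp: W_def)
    show "{u\<in>W B. P u} \<subseteq> rev ` {u\<in>W B. P (rev u)}"
    proof
      fix u assume "u \<in> {u\<in>W B. P u}"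
      then have "rev u \<in> {u\<in>W B. P (rev u)}" by (auto simp: W_def)
      then show "u \<in> rev ` {u\<in>W B. P (rev u)}" by (metis rev_rev_ident image_eqI)
    qed
  qed
  moreover have "inj_on rev {u\<in>W B. P (rev u)}" by (auto simp: inj_on_def)
  ultimately show ?thesis by (metis card_image)
qed

lemma card_snoc_dec:
  assumes "B \<noteq> {#}"
  shows "card {u\<in>W B. P u} = (\<Sum>x\<in>set_mset B. card {u\<in>W (B - {#x#}). P (u @ [x])})"
proof -
  have "card {u\<in>W B. P u} = card {u\<in>W B. P (rev u)}" by (rule card_rev)
  also have "\<dots> = (\<Sum>x\<in>set_mset B. card {u\<in>W (B - {#x#}). P (rev (x#u))})"
    by (rule card_cons_dec[OF assms])
  also have "\<dots> = (\<Sum>x\<in>set_mset B. card {u\<in>W (B - {#x#}). P (u @ [x])})"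
  proof (intro sum.cong refl)
    fix x
    have "card {u\<in>W (B - {#x#}). P (rev (x#u))} = card {u\<in>W (B - {#x#}). P (rev (x#rev u))}"
      by (rule card_rev)
    then show "card {u\<in>W (B - {#x#}). P (rev (x#u))} = card {u\<in>W (B - {#x#}). P (u @ [x])}"
      by simp
  qed
  finally show ?thesis .
qed

lemma const_step:
  assumes IH: "\<And>B' A'. size B' < size B \<Longrightarrow> count B' k \<le> A' \<Longrightarrow> A' < size B' \<Longrightarrow>
      card {u\<in>W B'. hit k A' u} = card {u\<in>W B'. hit k (Suc A') u}"
    and A: "Suc (count B k) \<le> A" "A < size B"
  shows "card {u\<in>W B. hit k A u} = card {u\<in>W B. hit k (Suc A) u}"
proof -
  have B: "B \<noteq> {#}" using A by auto
  define d where "d x = (if x = k then 2 else 1::nat)" for x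
  have dle: "d x \<le> A" if "x \<in># B" for x
  proof (cases "x = k")
    case True then have "count B k \<ge> 1" using that by (simp add: Suc_le_eq)
    then have "2 \<le> A" using A by linarith
    then show ?thesis using True unfolding d_def by simp
  next
    case False then show ?thesis using A by (simp add: d_def)
  qed
  have eq: "card {u\<in>W (B - {#x#}). hit k A (x#u)} = card {u\<in>W (B - {#x#}). hit k (A - d x) u}"
    and eq2: "card {u\<in>W (B - {#x#}). hit k (Suc A) (x#u)} = card {u\<in>W (B - {#x#}). hit k (Suc (A - d x)) u}"
    if "x \<in># B" for x
  proof -
    show "card {u\<in>W (B - {#x#}). hit k A (x#u)} = card {u\<in>W (B - {#x#}). hit k (A - d x) u}"
      using dle[OF that] A by (intro arg_cong[where f=card] Collect_cong) (auto simp: hit_Cons d_def[symmetric])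
    have "Suc A - d x = Suc (A - d x)" using dle[OF that] by simp
    then show "card {u\<in>W (B - {#x#}). hit k (Suc A) (x#u)} = card {u\<in>W (B - {#x#}). hit k (Suc (A - d x)) u}"
      using dle[OF that] A by (intro arg_cong[where f=card] Collect_cong) (auto simp: hit_Cons d_def[symmetric])
  qed
  have ih: "card {u\<in>W (B - {#x#}). hit k (A - d x) u} = card {u\<in>W (B - {#x#}). hit k (Suc (A - d x)) u}"
    if "x \<in># B" for x
  proof (rule IH)
    have "0 < size B" using that by (metis empty_iff gr0I set_mset_empty size_eq_0_iff_empty)
    then show "size (B - {#x#}) < size B" using that by (simp add: size_Diff_singleton)
    have sz: "size (B - {#x#}) = size B - 1" using that by (simp add: size_Diff_singleton)
    show "A - d x < size (B - {#x#})" using A dle[OF that] sz d_def by (auto split: if_splits)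
    show "count (B - {#x#}) k \<le> A - d x"
    proof (cases "x = k")
      case True then show ?thesis using A by (simp add: d_def)
    next
      case False then show ?thesis using A by (simp add: d_def)
    qed
  qed
  have "card {u\<in>W B. hit k A u} = (\<Sum>x\<in>set_mset B. card {u\<in>W (B - {#x#}). hit k A (x#u)})"
    by (rule card_cons_dec[OF B])
  also have "\<dots> = (\<Sum>x\<in>set_mset B. card {u\<in>W (B - {#x#}). hit k (Suc A) (x#u)})"
    using eq eq2 ih by (intro sum.cong refl) simp
  also have "\<dots> = card {u\<in>W B. hit k (Suc A) u}"
    by (rule card_cons_dec[OF B, symmetric])
  finally show ?thesis .
qed

lemma card_hit_rev:
  assumes "A \<le> size B + count B k"
  shows "card {u\<in>W B. hit k A u} = card {u\<in>W B. hit k (size B + count B k - A) u}"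
proof -
  have "card {u\<in>W B. hit k A u} = card {u\<in>W B. hit k A (rev u)}" by (rule card_rev)
  also have "\<dots> = card {u\<in>W B. hit k (size B + count B k - A) u}"
    using assms by (intro arg_cong[where f=card] Collect_cong)
      (auto simp: hit_rev length_W count_list_W)
  finally show ?thesis .
qed

lemma const1:
  "count B k \<le> A \<Longrightarrow> A < size B \<Longrightarrow> card {u\<in>W B. hit k A u} = card {u\<in>W B. hit k (Suc A) u}"
proof (induction "size B" arbitrary: B A rule: less_induct)
  case less
  note IH = less.hyps
  show ?case
  proof (cases "Suc (count B k) \<le> A")
    case True
    show ?thesis by (rule const_step[OF IH True less.prems(2)]) auto
  next
    case False
    then have Am: "A = count B k" using less.prems by simp
    have r1: "card {u\<in>W B. hit k A u} = card {u\<in>W B. hit k (size B) u}"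
      using card_hit_rev[of A B k] Am by simp
    have r2: "card {u\<in>W B. hit k (Suc A) u} = card {u\<in>W B. hit k (size B - 1) u}"
      using card_hit_rev[of "Suc A" B k] Am less.prems by simp
    show ?thesis
    proof (cases "size B = Suc A")
      case True
      then show ?thesis using r1 by simp
    next
      case False
      have "card {u\<in>W B. hit k (size B - 1) u} = card {u\<in>W B. hit k (Suc (size B - 1)) u}"
        by (rule const_step[OF IH]) (use False less.prems Am in auto)
      then show ?thesis using r1 r2 less.prems by simp
    qed
  qed
qed

definition Qk :: "'a \<Rightarrow> 'a multiset \<Rightarrow> nat" where
  "Qk k B = card {u\<in>W B. hit k (count B k) u}"

lemma Qk_pascal:
  assumes "count B k < size B"
  shows "Qk k B = (\<Sum>x\<in>set_mset B. Qk k (B - {#x#}))"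
proof -
  have B: "B \<noteq> {#}" using assms by auto
  have "Qk k B = (\<Sum>x\<in>set_mset B. card {u\<in>W (B - {#x#}). hit k (count B k) (u @ [x])})"
    unfolding Qk_def by (rule card_snoc_dec[OF B])
  also have "\<dots> = (\<Sum>x\<in>set_mset B. card {u\<in>W (B - {#x#}). hit k (count B k) u})"
  proof (intro sum.cong refl arg_cong[where f=card] Collect_cong)
    fix x u assume x: "x \<in> set_mset B"
    show "(u \<in> W (B - {#x#}) \<and> hit k (count B k) (u @ [x])) = (u \<in> W (B - {#x#}) \<and> hit k (count B k) u)"
    proof (cases "u \<in> W (B - {#x#})")
      case True
      then have "mset (u @ [x]) = B" using x by (simp add: W_def)
      then have "count_list (u @ [x]) k = count B k" by (metis count_mset)
      then show ?thesis by (simp add: hit_snoc)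
    qed simp
  qed
  also have "\<dots> = (\<Sum>x\<in>set_mset B. Qk k (B - {#x#}))"
  proof (intro sum.cong refl)
    fix x assume x: "x \<in> set_mset B"
    show "card {u\<in>W (B - {#x#}). hit k (count B k) u} = Qk k (B - {#x#})"
    proof (cases "x = k")
      case False then show ?thesis by (simp add: Qk_def)
    next
      case True
      have c: "count (B - {#x#}) k = count B k - 1" "count B k \<ge> 1"
        using True x by (auto simp: Suc_le_eq)
      have sz: "size (B - {#x#}) = size B - 1" using x by (simp add: size_Diff_singleton)
      have "card {u\<in>W (B - {#x#}). hit k (count B k - 1) u} = card {u\<in>W (B - {#x#}). hit k (Suc (count B k - 1)) u}"
        by (rule const1) (use c sz assms in linarith)+
      then show ?thesis using c by (simp add: Qk_def)
    qed
  qed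
  finally show ?thesis .
qed

lemma finite_PS: "finite {p. length p = l \<and> mset p \<subseteq># B}"
proof (rule finite_subset)
  show "{p. length p = l \<and> mset p \<subseteq># B} \<subseteq> {p. set p \<subseteq> set_mset B \<and> length p = l}"
    by (auto dest!: set_mset_mono)
  show "finite {p. set p \<subseteq> set_mset B \<and> length p = l}"
    by (rule finite_lists_length_eq) simp
qed

lemma split_card:
  assumes "l \<le> size B"
  shows "card {w\<in>W B. R (take l w) (drop l w)} =
    (\<Sum>p\<in>{p. length p = l \<and> mset p \<subseteq># B}. card {q\<in>W (B - mset p). R p q})"
proof -
  let ?PS = "{p. length p = l \<and> mset p \<subseteq># B}"
  have eq: "{w\<in>W B. R (take l w) (drop l w)} = (\<Union>p\<in>?PS. (\<lambda>q. p @ q) ` {q\<in>W (B - mset p). R p q})"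
  proof
    show "{w\<in>W B. R (take l w) (drop l w)} \<subseteq> (\<Union>p\<in>?PS. (\<lambda>q. p @ q) ` {q\<in>W (B - mset p). R p q})"
    proof
      fix w assume w: "w \<in> {w\<in>W B. R (take l w) (drop l w)}"
      then have mw: "mset w = B" by (simp add: W_def)
      have lw: "length w = size B" using mw by (metis size_mset)
      have m: "mset (take l w) + mset (drop l w) = B" using mw
        by (metis append_take_drop_id mset_append)
      have "take l w \<in> ?PS" using lw assms m by (auto intro: mset_subset_eq_add_left)
      moreover have "drop l w \<in> {q\<in>W (B - mset (take l w)). R (take l w) q}"
        using m w by (auto simp: W_def)
      ultimately show "w \<in> (\<Union>p\<in>?PS. (\<lambda>q. p @ q) ` {q\<in>W (B - mset p). R p q})"
        by (intro UN_I[of "take l w"] image_eqI[of _ _ "drop l w"]) auto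
    qed
    show "(\<Union>p\<in>?PS. (\<lambda>q. p @ q) ` {q\<in>W (B - mset p). R p q}) \<subseteq> {w\<in>W B. R (take l w) (drop l w)}"
      by (auto simp: W_def)
  qed
  have "card {w\<in>W B. R (take l w) (drop l w)} = (\<Sum>p\<in>?PS. card ((\<lambda>q. p @ q) ` {q\<in>W (B - mset p). R p q}))"
    unfolding eq by (rule card_UN_disjoint) (auto simp: finite_PS)
  also have "\<dots> = (\<Sum>p\<in>?PS. card {q\<in>W (B - mset p). R p q})"
    by (intro sum.cong refl card_image) (auto simp: inj_on_def)
  finally show ?thesis .
qed

lemma split_card2:
  assumes "l \<le> size B"
  shows "card {w\<in>W B. R (take l w) (drop l w)} =
    (\<Sum>q\<in>{q. length q = size B - l \<and> mset q \<subseteq># B}. card {p\<in>W (B - mset q). R p q})"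
proof -
  let ?QS = "{q. length q = size B - l \<and> mset q \<subseteq># B}"
  have eq: "{w\<in>W B. R (take l w) (drop l w)} = (\<Union>q\<in>?QS. (\<lambda>p. p @ q) ` {p\<in>W (B - mset q). R p q})"
  proof
    show "{w\<in>W B. R (take l w) (drop l w)} \<subseteq> (\<Union>q\<in>?QS. (\<lambda>p. p @ q) ` {p\<in>W (B - mset q). R p q})"
    proof
      fix w assume w: "w \<in> {w\<in>W B. R (take l w) (drop l w)}"
      then have mw: "mset w = B" by (simp add: W_def)
      have lw: "length w = size B" using mw by (metis size_mset)
      have m: "mset (take l w) + mset (drop l w) = B" using mw
        by (metis append_take_drop_id mset_append)
      have "drop l w \<in> ?QS" using lw assms m by (auto intro: mset_subset_eq_add_right)
      moreover have "take l w \<in> {p\<in>W (B - mset (drop l w)). R p (drop l w)}"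
        using m w by (auto simp: W_def)
      ultimately show "w \<in> (\<Union>q\<in>?QS. (\<lambda>p. p @ q) ` {p\<in>W (B - mset q). R p q})"
        by (intro UN_I[of "drop l w"] image_eqI[of _ _ "take l w"]) auto
    qed
    show "(\<Union>q\<in>?QS. (\<lambda>p. p @ q) ` {p\<in>W (B - mset q). R p q}) \<subseteq> {w\<in>W B. R (take l w) (drop l w)}"
    proof
      fix w assume "w \<in> (\<Union>q\<in>?QS. (\<lambda>p. p @ q) ` {p\<in>W (B - mset q). R p q})"
      then obtain p q where q: "q \<in> ?QS" and p: "p \<in> W (B - mset q)" "R p q" and w: "w = p @ q"
        by auto
      have mp: "mset p = B - mset q" using p by (simp add: W_def)
      have "size (mset p) = size B - size (mset q)" using q mp by (simp add: size_Diff_submset)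
      then have lp: "length p = l" using q assms by simp
      have "mset w = B" using w mp q by (simp add: subset_mset.diff_add)
      then show "w \<in> {w\<in>W B. R (take l w) (drop l w)}" using w lp p by (simp add: W_def)
    qed
  qed
  have fin: "finite ?QS" by (rule finite_PS)
  have "card {w\<in>W B. R (take l w) (drop l w)} = (\<Sum>q\<in>?QS. card ((\<lambda>p. p @ q) ` {p\<in>W (B - mset q). R p q}))"
    unfolding eq by (rule card_UN_disjoint) (auto simp: fin)
  also have "\<dots> = (\<Sum>q\<in>?QS. card {p\<in>W (B - mset q). R p q})"
    by (intro sum.cong refl card_image) (auto simp: inj_on_def)
  finally show ?thesis .
qed



definition Pp :: "nat list \<Rightarrow> bool" where "Pp p \<longleftrightarrow> hit (0::nat) (length p) p"
definition Qq :: "nat list \<Rightarrow> bool" where "Qq q \<longleftrightarrow> hit (1::nat) (count_list q 1) q"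

lemma Qq_card: "card {q\<in>W C. Qq q} = Qk 1 C"
  unfolding Qk_def Qq_def by (intro arg_cong[where f=card] Collect_cong) (auto simp: count_list_W)

lemma Pp_card: "card {p\<in>W A. Pp p} = Qk 0 A"
proof -
  have "card {p\<in>W A. Pp p} = card {p\<in>W A. Pp (rev p)}" by (rule card_rev)
  also have "\<dots> = Qk 0 A" unfolding Qk_def Pp_def
  proof (intro arg_cong[where f=card] Collect_cong)
    fix p
    show "(p \<in> W A \<and> hit 0 (length (rev p)) (rev p)) = (p \<in> W A \<and> hit 0 (count A 0) p)"
      using hit_rev[of "length p" p 0] by (auto simp: count_list_W)
  qed
  finally show ?thesis .
qed

lemma Q_butlast:
  assumes "count C 1 < size C"
  shows "card {q\<in>W C. Qq q} = card {q\<in>W C. Qq (butlast q)}"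
proof -
  have C: "C \<noteq> {#}" using assms by auto
  have "card {q\<in>W C. Qq q} = (\<Sum>x\<in>set_mset C. Qk 1 (C - {#x#}))"
    using Qq_card Qk_pascal[OF assms] by simp
  also have "\<dots> = (\<Sum>x\<in>set_mset C. card {u\<in>W (C - {#x#}). Qq (butlast (u @ [x]))})"
    using Qq_card by simp
  also have "\<dots> = card {q\<in>W C. Qq (butlast q)}"
    by (rule card_snoc_dec[OF C, symmetric])
  finally show ?thesis .
qed

lemma Q_tl:
  assumes "count C 1 < size C"
  shows "card {q\<in>W C. Qq q} = card {q\<in>W C. Qq (tl q)}"
proof -
  have C: "C \<noteq> {#}" using assms by auto
  have "card {q\<in>W C. Qq q} = (\<Sum>x\<in>set_mset C. Qk 1 (C - {#x#}))"
    using Qq_card Qk_pascal[OF assms] by simp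
  also have "\<dots> = (\<Sum>x\<in>set_mset C. card {u\<in>W (C - {#x#}). Qq (tl (x # u))})"
    using Qq_card by simp
  also have "\<dots> = card {q\<in>W C. Qq (tl q)}"
    by (rule card_cons_dec[OF C, symmetric])
  finally show ?thesis .
qed

lemma P_butlast:
  assumes "count A 0 < size A"
  shows "card {p\<in>W A. Pp p} = card {p\<in>W A. Pp (butlast p)}"
proof -
  have A: "A \<noteq> {#}" using assms by auto
  have "card {p\<in>W A. Pp p} = (\<Sum>x\<in>set_mset A. Qk 0 (A - {#x#}))"
    using Pp_card Qk_pascal[OF assms] by simp
  also have "\<dots> = (\<Sum>x\<in>set_mset A. card {u\<in>W (A - {#x#}). Pp (butlast (u @ [x]))})"
    using Pp_card by simp
  also have "\<dots> = card {p\<in>W A. Pp (butlast p)}"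
    by (rule card_snoc_dec[OF A, symmetric])
  finally show ?thesis .
qed

definition NWd :: "nat multiset \<Rightarrow> nat" where
  "NWd B = card {w\<in>W B. hit 0 (count B 0) w \<and> hit 1 (count B 0 + count B 1) w}"

lemma count_le_size': "count B x \<le> size B"
  by (rule count_le_size)

lemma conv:
  assumes w: "w \<in> W B"
  shows "(hit 0 (count B 0) w \<and> hit 1 (count B 0 + count B 1) w) \<longleftrightarrow>
     (Pp (take (count B 0) w) \<and> Qq (drop (count B 0) w))"
proof -
  let ?l = "count B 0"
  have lw: "length w = size B" using length_W[OF w] .
  have le: "?l \<le> length w" using lw count_le_size'[of B 0] by simp
  have 1: "hit 0 ?l w \<longleftrightarrow> Pp (take ?l w)"
    using hit_take[where A="?l" and l="?l" and u=w and k="0::nat"] le by (simp add: Pp_def min_def)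
  have c1: "count B 1 = count_list (take ?l w) 1 + count_list (drop ?l w) 1"
    using count_take_drop[of ?l w 1] count_list_W[OF w] by simp
  have "hit 1 (?l + count B 1) (take ?l w @ drop ?l w) \<longleftrightarrow> hit 1 (count_list (drop ?l w) 1) (drop ?l w)"
    by (rule hit_append_big) (use le c1 in simp)
  then have 2: "hit 1 (?l + count B 1) w \<longleftrightarrow> Qq (drop ?l w)" by (simp add: Qq_def)
  show ?thesis using 1 2 by simp
qed

lemma NWd_alt: "NWd B = card {w\<in>W B. Pp (take (count B 0) w) \<and> Qq (drop (count B 0) w)}"
  unfolding NWd_def by (intro arg_cong[where f=card] Collect_cong) (use conv in blast)

lemma size_diff_mset: "mset p \<subseteq># B \<Longrightarrow> size (B - mset p) = size B - length p"
  by (simp add: size_Diff_submset)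

lemma count_diff_le: "count (B - M) x \<le> count B x"
  by simp

lemma main_word:
  assumes big: "count B 0 + count B 1 < size B"
  shows "NWd B = (\<Sum>x\<in>set_mset B. NWd (B - {#x#}))"
proof -
  define L1 where "L1 = count B 0"
  have Bne: "B \<noteq> {#}" using big by auto
  have L1le: "L1 < size B" using big L1_def by simp
  have S1: "card {w\<in>W B. Pp (take L1 w) \<and> Qq (drop L1 w)} = card {w\<in>W B. Pp (take L1 w) \<and> Qq (butlast (drop L1 w))}"
  proof -
    have "card {w\<in>W B. Pp (take L1 w) \<and> Qq (drop L1 w)} =
      (\<Sum>p\<in>{p. length p = L1 \<and> mset p \<subseteq># B}. card {q\<in>W (B - mset p). Pp p \<and> Qq q})"
      by (rule split_card[where R="\<lambda>p q. Pp p \<and> Qq q"]) (use L1le in simp)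
    also have "\<dots> = (\<Sum>p\<in>{p. length p = L1 \<and> mset p \<subseteq># B}. card {q\<in>W (B - mset p). Pp p \<and> Qq (butlast q)})"
    proof (intro sum.cong refl)
      fix p assume p: "p \<in> {p. length p = L1 \<and> mset p \<subseteq># B}"
      show "card {q\<in>W (B - mset p). Pp p \<and> Qq q} = card {q\<in>W (B - mset p). Pp p \<and> Qq (butlast q)}"
      proof (cases "Pp p")
        case True
        have "count (B - mset p) 1 < size (B - mset p)"
          using p size_diff_mset[of p B] count_diff_le[of B "mset p" 1] big L1_def by auto
        then show ?thesis using True Q_butlast by simp
      qed simp
    qed
    also have "\<dots> = card {w\<in>W B. Pp (take L1 w) \<and> Qq (butlast (drop L1 w))}"
      by (rule split_card[where R="\<lambda>p q. Pp p \<and> Qq (butlast q)", symmetric]) (use L1le in simp)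
    finally show ?thesis .
  qed
  have S2: "card {w\<in>W B. Pp (take L1 w) \<and> Qq (butlast (drop L1 w))} =
     (\<Sum>x\<in>set_mset B. card {w\<in>W (B - {#x#}). Pp (take L1 w) \<and> Qq (drop L1 w)})"
  proof -
    have "card {w\<in>W B. Pp (take L1 w) \<and> Qq (butlast (drop L1 w))} =
     (\<Sum>x\<in>set_mset B. card {w\<in>W (B - {#x#}). Pp (take L1 (w @ [x])) \<and> Qq (butlast (drop L1 (w @ [x])))})"
      by (rule card_snoc_dec[OF Bne])
    also have "\<dots> = (\<Sum>x\<in>set_mset B. card {w\<in>W (B - {#x#}). Pp (take L1 w) \<and> Qq (drop L1 w)})"
    proof (intro sum.cong refl arg_cong[where f=card] Collect_cong)
      fix x w assume x: "x \<in> set_mset B"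
      show "(w \<in> W (B - {#x#}) \<and> Pp (take L1 (w @ [x])) \<and> Qq (butlast (drop L1 (w @ [x])))) =
            (w \<in> W (B - {#x#}) \<and> Pp (take L1 w) \<and> Qq (drop L1 w))"
      proof (cases "w \<in> W (B - {#x#})")
        case True
        then have "length w = size B - 1" using x length_W by (fastforce simp: size_Diff_singleton)
        then have "L1 \<le> length w" using L1le by simp
        then show ?thesis by simp
      qed simp
    qed
    finally show ?thesis .
  qed
  have S3: "card {w\<in>W (B - {#x#}). Pp (take L1 w) \<and> Qq (drop L1 w)} = NWd (B - {#x#})"
    if x: "x \<in> set_mset B" for x
  proof (cases "x = 0")
    case False
    then have "count (B - {#x#}) 0 = L1" by (simp add: L1_def)
    then show ?thesis by (simp add: NWd_alt)
  next
    case True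
    define B' where "B' = B - {#x#}"
    have L1pos: "L1 \<ge> 1" using x True L1_def by (simp add: Suc_le_eq)
    have cB': "count B' 0 = L1 - 1" "count B' 1 = count B 1" using True by (auto simp: B'_def L1_def)
    have sB': "size B' = size B - 1" using x by (simp add: B'_def size_Diff_singleton)
    have T1: "card {w\<in>W B'. Pp (take L1 w) \<and> Qq (drop L1 w)} = card {w\<in>W B'. Pp (butlast (take L1 w)) \<and> Qq (drop L1 w)}"
    proof -
      have le: "L1 \<le> size B'" using sB' L1le by simp
      have "card {w\<in>W B'. Pp (take L1 w) \<and> Qq (drop L1 w)} =
        (\<Sum>q\<in>{q. length q = size B' - L1 \<and> mset q \<subseteq># B'}. card {p\<in>W (B' - mset q). Pp p \<and> Qq q})"
        by (rule split_card2[where R="\<lambda>p q. Pp p \<and> Qq q"]) (use le in simp)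
      also have "\<dots> = (\<Sum>q\<in>{q. length q = size B' - L1 \<and> mset q \<subseteq># B'}. card {p\<in>W (B' - mset q). Pp (butlast p) \<and> Qq q})"
      proof (intro sum.cong refl)
        fix q assume q: "q \<in> {q. length q = size B' - L1 \<and> mset q \<subseteq># B'}"
        show "card {p\<in>W (B' - mset q). Pp p \<and> Qq q} = card {p\<in>W (B' - mset q). Pp (butlast p) \<and> Qq q}"
        proof (cases "Qq q")
          case True
          have "count (B' - mset q) 0 < size (B' - mset q)"
            using q size_diff_mset[of q B'] count_diff_le[of B' "mset q" 0] cB' L1pos le by auto
          then show ?thesis using True P_butlast by simp
        qed simp
      qed
      also have "\<dots> = card {w\<in>W B'. Pp (butlast (take L1 w)) \<and> Qq (drop L1 w)}"
        by (rule split_card2[where R="\<lambda>p q. Pp (butlast p) \<and> Qq q", symmetric]) (use le in simp)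
      finally show ?thesis .
    qed
    have T2: "card {w\<in>W B'. Pp (butlast (take L1 w)) \<and> Qq (drop L1 w)} =
       card {w\<in>W B'. Pp (take (L1 - 1) w) \<and> Qq (tl (drop (L1 - 1) w))}"
    proof -
      have "drop L1 w = tl (drop (L1 - 1) w)" for w :: "nat list"
        using L1pos by (metis Suc_diff_1 drop_Suc less_le_trans tl_drop zero_less_one)
      moreover have "butlast (take L1 w) = take (L1 - 1) w" if "w \<in> W B'" for w
        using that length_W[OF that] sB' L1le by (intro butlast_take) simp
      ultimately show ?thesis by (intro arg_cong[where f=card] Collect_cong) auto
    qed
    have T3: "card {w\<in>W B'. Pp (take (L1 - 1) w) \<and> Qq (tl (drop (L1 - 1) w))} =
       card {w\<in>W B'. Pp (take (L1 - 1) w) \<and> Qq (drop (L1 - 1) w)}"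
    proof -
      have le: "L1 - 1 \<le> size B'" using sB' L1le by simp
      have "card {w\<in>W B'. Pp (take (L1 - 1) w) \<and> Qq (tl (drop (L1 - 1) w))} =
        (\<Sum>p\<in>{p. length p = L1 - 1 \<and> mset p \<subseteq># B'}. card {q\<in>W (B' - mset p). Pp p \<and> Qq (tl q)})"
        by (rule split_card[where R="\<lambda>p q. Pp p \<and> Qq (tl q)"]) (use le in simp)
      also have "\<dots> = (\<Sum>p\<in>{p. length p = L1 - 1 \<and> mset p \<subseteq># B'}. card {q\<in>W (B' - mset p). Pp p \<and> Qq q})"
      proof (intro sum.cong refl)
        fix p assume p: "p \<in> {p. length p = L1 - 1 \<and> mset p \<subseteq># B'}"
        show "card {q\<in>W (B' - mset p). Pp p \<and> Qq (tl q)} = card {q\<in>W (B' - mset p). Pp p \<and> Qq q}"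
        proof (cases "Pp p")
          case True
          have "count (B' - mset p) 1 < size (B' - mset p)"
            using p size_diff_mset[of p B'] count_diff_le[of B' "mset p" 1] cB' sB' big L1_def L1pos by auto
          then show ?thesis using True Q_tl by simp
        qed simp
      qed
      also have "\<dots> = card {w\<in>W B'. Pp (take (L1 - 1) w) \<and> Qq (drop (L1 - 1) w)}"
        by (rule split_card[where R="\<lambda>p q. Pp p \<and> Qq q", symmetric]) (use le in simp)
      finally show ?thesis .
    qed
    show ?thesis using T1 T2 T3 cB' by (simp add: NWd_alt B'_def[symmetric])
  qed
  show ?thesis using S1 S2 S3 by (simp add: NWd_alt L1_def[symmetric])
qed



lemma hit_skip:
  "A \<le> length w + count_list w k \<Longrightarrow>
   hit k A w \<longleftrightarrow> \<not>(\<exists>i<length w. w!i = k \<and> i + count_list (take i w) k + 1 = A)"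
proof (induction w arbitrary: A)
  case Nil then show ?case by simp
next
  case (Cons c u)
  define d where "d = (if c = k then 2 else 1::nat)"
  have hc: "hit k A (c#u) \<longleftrightarrow> A = 0 \<or> (d \<le> A \<and> hit k (A - d) u)"
    by (simp add: hit_Cons d_def)
  have sk: "(\<exists>i<length (c#u). (c#u)!i = k \<and> i + count_list (take i (c#u)) k + 1 = A) \<longleftrightarrow>
      (c = k \<and> A = 1) \<or> (d \<le> A \<and> (\<exists>i<length u. u!i = k \<and> i + count_list (take i u) k + 1 = A - d))"
  proof
    assume "\<exists>i<length (c#u). (c#u)!i = k \<and> i + count_list (take i (c#u)) k + 1 = A"
    then obtain i where i: "i < length (c#u)" "(c#u)!i = k" "i + count_list (take i (c#u)) k + 1 = A" by blast
    show "(c = k \<and> A = 1) \<or> (d \<le> A \<and> (\<exists>i<length u. u!i = k \<and> i + count_list (take i u) k + 1 = A - d))"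
    proof (cases i)
      case 0 then show ?thesis using i by simp
    next
      case (Suc j)
      have "j < length u" "u!j = k" "j + count_list (take j u) k + 1 = A - d" "d \<le> A"
        using i Suc by (auto simp: d_def split: if_splits)
      then show ?thesis by blast
    qed
  next
    assume "(c = k \<and> A = 1) \<or> (d \<le> A \<and> (\<exists>i<length u. u!i = k \<and> i + count_list (take i u) k + 1 = A - d))"
    then show "\<exists>i<length (c#u). (c#u)!i = k \<and> i + count_list (take i (c#u)) k + 1 = A"
    proof
      assume "c = k \<and> A = 1" then show ?thesis by (intro exI[of _ 0]) auto
    next
      assume "d \<le> A \<and> (\<exists>i<length u. u!i = k \<and> i + count_list (take i u) k + 1 = A - d)"
      then obtain j where j: "d \<le> A" "j < length u" "u!j = k" "j + count_list (take j u) k + 1 = A - d" by blast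
      show ?thesis by (rule exI[of _ "Suc j"]) (use j in \<open>auto simp: d_def split: if_splits\<close>)
    qed
  qed
  have le: "A - d \<le> length u + count_list u k" using Cons.prems by (simp add: d_def split: if_splits)
  show ?case
  proof (cases "A = 0")
    case True then show ?thesis using hc sk by simp
  next
    case False
    show ?thesis
    proof (cases "d \<le> A")
      case True
      have "\<not> (c = k \<and> A = 1)" using True by (auto simp: d_def)
      then show ?thesis using hc sk Cons.IH[OF le] True False by simp
    next
      case dA: False
      then have "c = k \<and> A = 1" using False by (auto simp: d_def split: if_splits)
      then show ?thesis using hc sk dA by simp
    qed
  qed
qed

lemma skip_drop:
  assumes "c0 \<le> length w"
  shows "(\<exists>i<length w. w!i = k \<and> c0 + 1 + count_list (drop (Suc i) w) k = Suc i) \<longleftrightarrow>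
         \<not> hit k (c0 + count_list w k) w"
proof -
  have eq: "(c0 + 1 + count_list (drop (Suc i) w) k = Suc i) \<longleftrightarrow> (i + count_list (take i w) k + 1 = c0 + count_list w k)"
    if "i < length w" "w!i = k" for i
  proof -
    have "take (Suc i) w = take i w @ [k]" using that by (simp add: take_Suc_conv_app_nth)
    then have "count_list (take (Suc i) w) k = count_list (take i w) k + 1" by simp
    moreover have "count_list (take (Suc i) w) k + count_list (drop (Suc i) w) k = count_list w k"
      by (rule count_take_drop)
    ultimately show ?thesis by linarith
  qed
  have "hit k (c0 + count_list w k) w \<longleftrightarrow> \<not>(\<exists>i<length w. w!i = k \<and> i + count_list (take i w) k + 1 = c0 + count_list w k)"
    by (rule hit_skip) (use assms in simp)
  then show ?thesis using eq by blast
qed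

lemma count_list_map_upt: "count_list (map f [a..<b]) k = card {v\<in>{a..<b}. f v = k}"
proof (induction b)
  case 0 then show ?case by simp
next
  case (Suc b)
  show ?case
  proof (cases "a \<le> b")
    case True
    have "{v\<in>{a..<Suc b}. f v = k} = {v\<in>{a..<b}. f v = k} \<union> (if f b = k then {b} else {})"
      using True by (auto simp: less_Suc_eq)
    then show ?thesis using Suc True by (auto simp: card_insert_if)
  next
    case False then show ?thesis by simp
  qed
qed

context
  fixes L1 L2 L3 L4 :: nat
begin

definition "nn = L1 + L2 + L3 + L4"

definition blk :: "nat \<Rightarrow> nat" where
  "blk i = (if i \<le> L1 then 0 else if i \<le> L1 + L2 then 1 else if i \<le> L1 + L2 + L3 then 2 else 3)"

definition off :: "nat \<Rightarrow> nat" where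
  "off k = (if k = 0 then 0 else if k = 1 then L1 else if k = 2 then L1 + L2 else L1 + L2 + L3)"

definition len :: "nat \<Rightarrow> nat" where
  "len k = (if k = 0 then L1 else if k = 1 then L2 else if k = 2 then L3 else L4)"

definition BL :: "nat multiset" where
  "BL = replicate_mset L1 0 + replicate_mset L2 1 + replicate_mset L3 2 + replicate_mset L4 3"

lemma blk_le3: "blk i \<le> 3"
  by (simp add: blk_def)

lemma blk_iff:
  assumes "1 \<le> i" "i \<le> nn" "k \<le> 3"
  shows "blk i = k \<longleftrightarrow> off k < i \<and> i \<le> off k + len k"
  using assms by (auto simp: blk_def off_def len_def nn_def)

lemma block_set:
  assumes "k \<le> 3"
  shows "{i\<in>{1..nn}. blk i = k} = {off k + 1..off k + len k}"
  using assms by (auto simp: blk_def off_def len_def nn_def)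

lemma card_block: "k \<le> 3 \<Longrightarrow> card {i\<in>{1..nn}. blk i = k} = len k"
  by (subst block_set) auto

lemma block_empty: "k > 3 \<Longrightarrow> {i\<in>{1..nn}. blk i = k} = {}"
  using blk_le3 by (auto simp: not_le[symmetric])

lemma count_BL: "count BL k = (if k \<le> 3 then len k else 0)"
  by (auto simp: BL_def len_def)

lemma size_BL: "size BL = nn"
  by (simp add: BL_def nn_def)

definition DEC :: "(nat \<Rightarrow> nat) \<Rightarrow> bool" where
  "DEC p \<longleftrightarrow> (\<forall>i j. 1 \<le> i \<longrightarrow> i < j \<longrightarrow> j \<le> nn \<longrightarrow> blk i = blk j \<longrightarrow> p j < p i)"

definition DECs :: "(nat \<Rightarrow> nat) \<Rightarrow> bool" where
  "DECs s \<longleftrightarrow> (\<forall>a b. 1 \<le> a \<longrightarrow> a < b \<longrightarrow> b \<le> nn \<longrightarrow> blk (s a) = blk (s b) \<longrightarrow> s b < s a)"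

lemma dec4_iff:
  "(dec_on p 1 L1 \<and> dec_on p (L1+1) (L1+L2) \<and> dec_on p (L1+L2+1) (L1+L2+L3) \<and> dec_on p (L1+L2+L3+1) (L1+L2+L3+L4))
   \<longleftrightarrow> DEC p"
proof
  assume H: "dec_on p 1 L1 \<and> dec_on p (L1+1) (L1+L2) \<and> dec_on p (L1+L2+1) (L1+L2+L3) \<and> dec_on p (L1+L2+L3+1) (L1+L2+L3+L4)"
  show "DEC p" unfolding DEC_def
  proof (intro allI impI)
    fix i j assume ij: "1 \<le> i" "i < j" "j \<le> nn" "blk i = blk j"
    show "p j < p i"
      using H ij unfolding dec_on_def blk_def nn_def
      by (auto split: if_splits)
  qed
next
  assume H: "DEC p"
  have b: "blk i = blk j" if "lo \<le> i" "i < j" "j \<le> hi" "(lo, hi) \<in> {(1, L1), (L1+1, L1+L2), (L1+L2+1, L1+L2+L3), (L1+L2+L3+1, L1+L2+L3+L4)}" for lo hi i j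
    using that by (auto simp: blk_def)
  show "dec_on p 1 L1 \<and> dec_on p (L1+1) (L1+L2) \<and> dec_on p (L1+L2+1) (L1+L2+L3) \<and> dec_on p (L1+L2+L3+1) (L1+L2+L3+L4)"
    unfolding dec_on_def
  proof (intro conjI allI impI)
    fix i j
    assume "1 \<le> i \<and> i < j \<and> j \<le> L1" then show "p j < p i"
      using H b[of 1 i j L1] unfolding DEC_def nn_def by auto
  next
    fix i j
    assume "L1 + 1 \<le> i \<and> i < j \<and> j \<le> L1 + L2" then show "p j < p i"
      using H b[of "L1+1" i j "L1+L2"] unfolding DEC_def nn_def by auto
  next
    fix i j
    assume "L1 + L2 + 1 \<le> i \<and> i < j \<and> j \<le> L1 + L2 + L3" then show "p j < p i"
      using H b[of "L1+L2+1" i j "L1+L2+L3"] unfolding DEC_def nn_def by auto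
  next
    fix i j
    assume "L1 + L2 + L3 + 1 \<le> i \<and> i < j \<and> j \<le> L1 + L2 + L3 + L4" then show "p j < p i"
      using H b[of "L1+L2+L3+1" i j "L1+L2+L3+L4"] unfolding DEC_def nn_def by auto
  qed
qed

lemma DEC_inv:
  assumes p: "p permutes {1..nn}" and d: "DEC p"
  shows "DECs (inv p)"
  unfolding DECs_def
proof (intro allI impI)
  fix a b assume ab: "1 \<le> a" "a < b" "b \<le> nn" "blk (inv p a) = blk (inv p b)"
  have ia: "inv p a \<in> {1..nn}" "inv p b \<in> {1..nn}"
    using ab permutes_in_image[OF permutes_inv[OF p]] by auto
  have pa: "p (inv p a) = a" "p (inv p b) = b" using permutes_inverses(1)[OF p] by auto
  have ne: "inv p a \<noteq> inv p b"
  proof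
    assume "inv p a = inv p b" then have "a = b" using pa by metis
    then show False using ab by simp
  qed
  show "inv p b < inv p a"
  proof (rule ccontr)
    assume "\<not> inv p b < inv p a"
    then have "inv p a < inv p b" using ne by simp
    then have "p (inv p b) < p (inv p a)" using d ia ab unfolding DEC_def by auto
    then show False using pa ab by simp
  qed
qed

lemma DECs_inv:
  assumes s: "s permutes {1..nn}" and d: "DECs s"
  shows "DEC (inv s)"
  unfolding DEC_def
proof (intro allI impI)
  fix i j assume ij: "1 \<le> i" "i < j" "j \<le> nn" "blk i = blk j"
  have ia: "inv s i \<in> {1..nn}" "inv s j \<in> {1..nn}"
    using ij permutes_in_image[OF permutes_inv[OF s]] by auto
  have sa: "s (inv s i) = i" "s (inv s j) = j" using permutes_inverses(1)[OF s] by auto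
  have ne: "inv s i \<noteq> inv s j"
  proof
    assume "inv s i = inv s j" then have "i = j" using sa by metis
    then show False using ij by simp
  qed
  show "inv s j < inv s i"
  proof (rule ccontr)
    assume "\<not> inv s j < inv s i"
    then have "inv s i < inv s j" using ne by simp
    moreover have "blk (s (inv s i)) = blk (s (inv s j))" using sa ij by simp
    ultimately have "s (inv s j) < s (inv s i)" using d ia unfolding DECs_def by auto
    then show False using sa ij by simp
  qed
qed

definition Sp where "Sp = {p. p permutes {1..nn} \<and> DEC p \<and> (\<forall>i\<in>{1..L1+L2}. p i \<noteq> i)}"
definition Ss where "Ss = {s. s permutes {1..nn} \<and> DECs s \<and> (\<forall>i\<in>{1..L1+L2}. s i \<noteq> i)}"

lemma Nblk_Sp: "Nblk L1 L2 L3 L4 = card Sp"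
  unfolding Nblk_def Sp_def using dec4_iff nn_def
  by (intro arg_cong[where f=card] Collect_cong) auto

lemma card_Sp_Ss: "card Sp = card Ss"
proof (rule bij_betw_same_card[of inv])
  show "bij_betw inv Sp Ss"
  proof (rule bij_betw_byWitness[where f'=inv])
    show "\<forall>a\<in>Sp. inv (inv a) = a" by (auto simp: Sp_def permutes_inv_inv)
    show "\<forall>a\<in>Ss. inv (inv a) = a" by (auto simp: Ss_def permutes_inv_inv)
    show "inv ` Sp \<subseteq> Ss"
    proof
      fix s assume "s \<in> inv ` Sp"
      then obtain p where p: "p \<in> Sp" "s = inv p" by blast
      have pp: "p permutes {1..nn}" using p by (simp add: Sp_def)
      have "\<forall>i\<in>{1..L1+L2}. inv p i \<noteq> i" using p permutes_inv_eq[OF pp] by (auto simp: Sp_def)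
      then show "s \<in> Ss" using p pp DEC_inv permutes_inv by (auto simp: Sp_def Ss_def)
    qed
    show "inv ` Ss \<subseteq> Sp"
    proof
      fix p assume "p \<in> inv ` Ss"
      then obtain s where s: "s \<in> Ss" "p = inv s" by blast
      have ss: "s permutes {1..nn}" using s by (simp add: Ss_def)
      have "\<forall>i\<in>{1..L1+L2}. inv s i \<noteq> i" using s permutes_inv_eq[OF ss] by (auto simp: Ss_def)
      then show "p \<in> Sp" using s ss DECs_inv permutes_inv by (auto simp: Sp_def Ss_def)
    qed
  qed
qed


definition phi :: "(nat \<Rightarrow> nat) \<Rightarrow> nat list" where
  "phi s = map (\<lambda>v. blk (s v)) [1..<Suc nn]"

definition psi :: "nat list \<Rightarrow> nat \<Rightarrow> nat" where
  "psi w v = (if 1 \<le> v \<and> v \<le> nn then off (w!(v-1)) + 1 + count_list (drop v w) (w!(v-1)) else v)"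

definition Vw where "Vw = {w\<in>W BL. hit 0 L1 w \<and> hit 1 (L1+L2) w}"

lemma W_BL_length: "w \<in> W BL \<Longrightarrow> length w = nn"
  using length_W[of w BL] size_BL by simp

lemma W_BL_letters:
  assumes "w \<in> W BL" "i < length w"
  shows "w!i \<le> 3"
proof -
  have "w!i \<in> set w" using assms(2) by simp
  then have "w!i \<in># BL" using assms(1) by (simp add: W_def flip: set_mset_mset)
  then have "count BL (w!i) > 0" by simp
  then show ?thesis by (simp add: count_BL split: if_splits)
qed

lemma W_BL_count: "w \<in> W BL \<Longrightarrow> k \<le> 3 \<Longrightarrow> count_list w k = len k"
  by (simp add: count_list_W[of w BL k] count_BL)

lemma off_len_le: "k \<le> 3 \<Longrightarrow> off k + len k \<le> nn"
  by (auto simp: off_def len_def nn_def)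

lemma count_drop_lt:
  assumes "1 \<le> v" "v \<le> length w"
  shows "count_list (drop v w) (w!(v-1)) < count_list w (w!(v-1))"
proof -
  have "take v w = take (v-1) w @ [w!(v-1)]"
    using take_Suc_conv_app_nth[of "v-1" w] assms by simp
  then have "count_list (take v w) (w!(v-1)) \<ge> 1" by simp
  then show ?thesis using count_take_drop[of v w "w!(v-1)"] by linarith
qed

lemma psi_block:
  assumes w: "w \<in> W BL" and v: "v \<in> {1..nn}"
  shows "off (w!(v-1)) < psi w v \<and> psi w v \<le> off (w!(v-1)) + len (w!(v-1))"
proof -
  have lw: "length w = nn" using W_BL_length[OF w] .
  have k3: "w!(v-1) \<le> 3" using W_BL_letters[OF w] v lw by auto
  have "count_list (drop v w) (w!(v-1)) < len (w!(v-1))"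
    using count_drop_lt[of v w] v lw W_BL_count[OF w k3] by auto
  then show ?thesis using v by (simp add: psi_def)
qed

lemma psi_range:
  assumes w: "w \<in> W BL" and v: "v \<in> {1..nn}"
  shows "psi w v \<in> {1..nn}" "blk (psi w v) = w!(v-1)"
proof -
  have lw: "length w = nn" using W_BL_length[OF w] .
  have k3: "w!(v-1) \<le> 3" using W_BL_letters[OF w] v lw by auto
  have b: "off (w!(v-1)) < psi w v \<and> psi w v \<le> off (w!(v-1)) + len (w!(v-1))"
    by (rule psi_block[OF w v])
  then show r: "psi w v \<in> {1..nn}" using off_len_le[OF k3] by auto
  show "blk (psi w v) = w!(v-1)" using blk_iff[of "psi w v" "w!(v-1)"] r b k3 by auto
qed

lemma count_drop_le: "count_list (drop n xs) k \<le> count_list xs k"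
  using count_take_drop[of n xs k] by linarith

lemma count_drop_mono:
  assumes "a < b" "b \<le> length w"
  shows "count_list (drop b w) (w!(b-1)) < count_list (drop a w) (w!(b-1))"
proof -
  have c: "w!(b-1) # drop b w = drop (b-1) w"
    using Cons_nth_drop_Suc[of "b-1" w] assms by simp
  have "drop (b-1) w = drop (b - 1 - a) (drop a w)" using assms by simp
  then have "count_list (drop (b-1) w) (w!(b-1)) \<le> count_list (drop a w) (w!(b-1))"
    using count_drop_le by metis
  moreover have "count_list (drop (b-1) w) (w!(b-1)) = Suc (count_list (drop b w) (w!(b-1)))"
    using arg_cong[OF c, of "\<lambda>xs. count_list xs (w!(b-1))"] by simp
  ultimately show ?thesis by simp
qed

lemma psi_dec:
  assumes w: "w \<in> W BL" and ab: "1 \<le> a" "a < b" "b \<le> nn" and eq: "w!(a-1) = w!(b-1)"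
  shows "psi w b < psi w a"
proof -
  have lw: "length w = nn" using W_BL_length[OF w] .
  have "count_list (drop b w) (w!(b-1)) < count_list (drop a w) (w!(b-1))"
    by (rule count_drop_mono) (use ab lw in auto)
  then show ?thesis using ab eq by (simp add: psi_def)
qed

lemma psi_inj:
  assumes w: "w \<in> W BL"
  shows "inj_on (psi w) {1..nn}"
proof (rule inj_onI)
  fix a b assume a: "a \<in> {1..nn}" and b: "b \<in> {1..nn}" and e: "psi w a = psi w b"
  have l: "w!(a-1) = w!(b-1)" using psi_range(2)[OF w a] psi_range(2)[OF w b] e by simp
  show "a = b"
  proof (rule ccontr)
    assume "a \<noteq> b"
    then consider "a < b" | "b < a" by linarith
    then show False
    proof cases
      case 1 then show False using psi_dec[OF w _ 1, of ] a b l e by auto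
    next
      case 2 then show False using psi_dec[OF w _ 2] a b l e by auto
    qed
  qed
qed

lemma psi_perm:
  assumes w: "w \<in> W BL"
  shows "psi w permutes {1..nn}"
proof (rule bij_imp_permutes)
  have "psi w ` {1..nn} = {1..nn}"
    by (rule endo_inj_surj) (use psi_range(1)[OF w] psi_inj[OF w] in auto)
  then show "bij_betw (psi w) {1..nn} {1..nn}" using psi_inj[OF w] by (simp add: bij_betw_def)
  show "psi w x = x" if "x \<notin> {1..nn}" for x using that by (auto simp: psi_def)
qed

lemma phi_psi:
  assumes w: "w \<in> W BL"
  shows "phi (psi w) = w"
proof (rule nth_equalityI)
  have lw: "length w = nn" using W_BL_length[OF w] .
  show "length (phi (psi w)) = length w" using lw by (simp add: phi_def)
  fix i assume "i < length (phi (psi w))"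
  then have i: "i < nn" by (simp add: phi_def del: upt_Suc)
  have "phi (psi w) ! i = blk (psi w (Suc i))" using i by (simp add: phi_def nth_map_upt del: upt_Suc)
  also have "\<dots> = w!i" using psi_range(2)[OF w, of "Suc i"] i by simp
  finally show "phi (psi w) ! i = w ! i" .
qed

lemma DECs_psi:
  assumes w: "w \<in> W BL"
  shows "DECs (psi w)"
  unfolding DECs_def
proof (intro allI impI)
  fix a b assume ab: "1 \<le> a" "a < b" "b \<le> nn" "blk (psi w a) = blk (psi w b)"
  have "w!(a-1) = w!(b-1)" using psi_range(2)[OF w, of a] psi_range(2)[OF w, of b] ab by simp
  then show "psi w b < psi w a" using psi_dec[OF w ab(1-3)] by simp
qed

lemma FPF_psi:
  assumes w: "w \<in> W BL"
  shows "(\<forall>i\<in>{1..L1+L2}. psi w i \<noteq> i) \<longleftrightarrow> hit 0 L1 w \<and> hit 1 (L1+L2) w"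
proof -
  have lw: "length w = nn" using W_BL_length[OF w] .
  have c0: "count_list w 0 = L1" using W_BL_count[OF w, of 0] by (simp add: len_def)
  have c1: "count_list w 1 = L2" using W_BL_count[OF w, of 1] by (simp add: len_def)
  have "(\<exists>v\<in>{1..L1+L2}. psi w v = v) \<longleftrightarrow>
    (\<exists>i<length w. w!i = 0 \<and> 0 + 1 + count_list (drop (Suc i) w) 0 = Suc i) \<or>
    (\<exists>i<length w. w!i = 1 \<and> L1 + 1 + count_list (drop (Suc i) w) 1 = Suc i)"
  proof
    assume "\<exists>v\<in>{1..L1+L2}. psi w v = v"
    then obtain v where v: "v \<in> {1..L1+L2}" "psi w v = v" by blast
    have vn: "v \<in> {1..nn}" using v by (auto simp: nn_def)
    have bv: "blk v = w!(v-1)" using psi_range(2)[OF w vn] v by simp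
    have "blk v \<le> 1" using v by (auto simp: blk_def)
    then have "w!(v-1) = 0 \<or> w!(v-1) = 1" using bv by auto
    moreover have "psi w v = off (w!(v-1)) + 1 + count_list (drop v w) (w!(v-1))"
      using vn by (simp add: psi_def)
    moreover have vl: "v - 1 < length w" "Suc (v - 1) = v" using vn lw by auto
    ultimately have e: "off (w!(v-1)) + 1 + count_list (drop (Suc (v-1)) w) (w!(v-1)) = Suc (v-1)"
      using v(2) by simp
    show "(\<exists>i<length w. w!i = 0 \<and> 0 + 1 + count_list (drop (Suc i) w) 0 = Suc i) \<or>
      (\<exists>i<length w. w!i = 1 \<and> L1 + 1 + count_list (drop (Suc i) w) 1 = Suc i)"
    proof (cases "w!(v-1) = 0")
      case True
      then show ?thesis using e vl by (intro disjI1 exI[of _ "v-1"]) (simp add: off_def)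
    next
      case False
      then have "w!(v-1) = 1" using \<open>w!(v-1) = 0 \<or> w!(v-1) = 1\<close> by simp
      then show ?thesis using e vl by (intro disjI2 exI[of _ "v-1"]) (simp add: off_def)
    qed
  next
    assume "(\<exists>i<length w. w!i = 0 \<and> 0 + 1 + count_list (drop (Suc i) w) 0 = Suc i) \<or>
      (\<exists>i<length w. w!i = 1 \<and> L1 + 1 + count_list (drop (Suc i) w) 1 = Suc i)"
    then obtain i k where i: "i < length w" "w!i = k" "k \<le> 1" "off k + 1 + count_list (drop (Suc i) w) k = Suc i"
      by (auto simp: off_def)
    have vn: "Suc i \<in> {1..nn}" using i lw by simp
    have pv: "psi w (Suc i) = Suc i" using vn i by (simp add: psi_def)
    have "blk (Suc i) = k" using psi_range(2)[OF w vn] pv i by simp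
    then have "Suc i \<le> L1 + L2" using i(3) by (auto simp: blk_def split: if_splits)
    then show "\<exists>v\<in>{1..L1+L2}. psi w v = v" using pv by (intro bexI[of _ "Suc i"]) auto
  qed
  also have "\<dots> \<longleftrightarrow> \<not> hit 0 (0 + count_list w 0) w \<or> \<not> hit 1 (L1 + count_list w 1) w"
    using skip_drop[of 0 w 0] skip_drop[of L1 w 1] lw by (simp add: nn_def)
  finally show ?thesis using c0 c1 by auto
qed

lemma card_classes:
  assumes s: "s permutes {1..nn}"
  shows "card {v\<in>{1..nn}. blk (s v) = k} = card {i\<in>{1..nn}. blk i = k}"
proof -
  have "s ` {v\<in>{1..nn}. blk (s v) = k} = {i\<in>{1..nn}. blk i = k}"
  proof
    show "s ` {v\<in>{1..nn}. blk (s v) = k} \<subseteq> {i\<in>{1..nn}. blk i = k}"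
      using permutes_in_image[OF s] by auto
    show "{i\<in>{1..nn}. blk i = k} \<subseteq> s ` {v\<in>{1..nn}. blk (s v) = k}"
    proof
      fix i assume i: "i \<in> {i\<in>{1..nn}. blk i = k}"
      have "s (inv s i) = i" using permutes_inverses(1)[OF s] by simp
      moreover have "inv s i \<in> {1..nn}" using i permutes_in_image[OF permutes_inv[OF s]] by auto
      ultimately show "i \<in> s ` {v\<in>{1..nn}. blk (s v) = k}" using i by (intro image_eqI[of _ _ "inv s i"]) auto
    qed
  qed
  moreover have "inj_on s {v\<in>{1..nn}. blk (s v) = k}"
    using permutes_inj_on[OF s] .
  ultimately show ?thesis using card_image by fastforce
qed

lemma phi_W:
  assumes s: "s permutes {1..nn}"
  shows "phi s \<in> W BL"
proof -
  have "mset (phi s) = BL"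
  proof (rule multiset_eqI)
    fix k
    have "count (mset (phi s)) k = card {v\<in>{1..<Suc nn}. blk (s v) = k}"
      unfolding count_mset phi_def by (rule count_list_map_upt)
    also have "\<dots> = card {v\<in>{1..nn}. blk (s v) = k}"
      by (intro arg_cong[where f=card]) auto
    also have "\<dots> = card {i\<in>{1..nn}. blk i = k}" by (rule card_classes[OF s])
    also have "\<dots> = count BL k"
    proof (cases "k \<le> 3")
      case True then show ?thesis using card_block[OF True] by (simp add: count_BL)
    next
      case False then show ?thesis using block_empty[of k] by (simp add: count_BL)
    qed
    finally show "count (mset (phi s)) k = count BL k" .
  qed
  then show ?thesis by (simp add: W_def)
qed

lemma sigma_formula:
  assumes s: "s permutes {1..nn}" and d: "DECs s" and v: "v \<in> {1..nn}"
  shows "s v = off (blk (s v)) + 1 + card {u\<in>{v<..nn}. blk (s u) = blk (s v)}"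
proof -
  define k where "k = blk (s v)"
  have k3: "k \<le> 3" by (simp add: k_def blk_le3)
  have sv: "s v \<in> {1..nn}" using v permutes_in_image[OF s] by simp
  have svb: "off k < s v" "s v \<le> off k + len k" using blk_iff[of "s v" k] sv k3 k_def by auto
  define C where "C = {u\<in>{1..nn}. blk (s u) = k}"
  define Cg where "Cg = {u\<in>{v<..nn}. blk (s u) = k}"
  define Cl where "Cl = {u\<in>{1..<v}. blk (s u) = k}"
  have cC: "card C = len k" unfolding C_def using card_classes[OF s] card_block[OF k3] by simp
  have Cu: "C = Cl \<union> insert v Cg" using v by (auto simp: C_def Cl_def Cg_def k_def)
  have fin: "finite Cl" "finite Cg" by (auto simp: Cl_def Cg_def)
  have "card C = card Cl + card (insert v Cg)"
    unfolding Cu by (rule card_Un_disjoint) (auto simp: fin Cl_def Cg_def)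
  also have "card (insert v Cg) = Suc (card Cg)" using fin by (simp add: Cg_def)
  finally have sumc: "card C = card Cl + Suc (card Cg)" .
  have inj: "inj_on s X" for X using permutes_inj_on[OF s] .
  have "s ` Cg \<subseteq> {off k + 1..<s v}"
  proof
    fix x assume "x \<in> s ` Cg"
    then obtain u where u: "u \<in> Cg" "x = s u" by blast
    have un: "s u \<in> {1..nn}" using u permutes_in_image[OF s] by (auto simp: Cg_def)
    have "off k < s u" using blk_iff[of "s u" k] un u k3 by (auto simp: Cg_def)
    moreover have "s u < s v" using d u v unfolding DECs_def Cg_def k_def by auto
    ultimately show "x \<in> {off k + 1..<s v}" using u by auto
  qed
  then have g: "card Cg \<le> s v - (off k + 1)"
    using card_mono[of "{off k + 1..<s v}" "s ` Cg"] card_image[OF inj[of Cg]] by simp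
  have "s ` Cl \<subseteq> {s v<..off k + len k}"
  proof
    fix x assume "x \<in> s ` Cl"
    then obtain u where u: "u \<in> Cl" "x = s u" by blast
    have un: "s u \<in> {1..nn}" using u v permutes_in_image[OF s] by (auto simp: Cl_def)
    have "s u \<le> off k + len k" using blk_iff[of "s u" k] un u k3 by (auto simp: Cl_def)
    moreover have "s v < s u" using d u v unfolding DECs_def Cl_def k_def by auto
    ultimately show "x \<in> {s v<..off k + len k}" using u by auto
  qed
  then have l: "card Cl \<le> off k + len k - s v"
    using card_mono[of "{s v<..off k + len k}" "s ` Cl"] card_image[OF inj[of Cl]] by simp
  have "card Cg = s v - (off k + 1)" using sumc cC g l svb by linarith
  then show ?thesis using svb by (simp add: Cg_def k_def)
qed

lemma psi_phi:
  assumes s: "s permutes {1..nn}" and d: "DECs s"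
  shows "psi (phi s) = s"
proof
  fix v
  show "psi (phi s) v = s v"
  proof (cases "v \<in> {1..nn}")
    case False
    then show ?thesis using permutes_not_in[OF s False] by (auto simp: psi_def)
  next
    case True
    have "phi s ! (v - 1) = (\<lambda>v. blk (s v)) (1 + (v - 1))"
      unfolding phi_def by (rule nth_map_upt) (use True in auto)
    then have pv: "phi s ! (v - 1) = blk (s v)" using True by simp
    have dv: "drop v (phi s) = map (\<lambda>u. blk (s u)) [Suc v..<Suc nn]"
      by (simp add: phi_def drop_map del: upt_Suc)
    have "count_list (drop v (phi s)) (blk (s v)) = card {u\<in>{Suc v..<Suc nn}. blk (s u) = blk (s v)}"
      unfolding dv by (rule count_list_map_upt)
    also have "\<dots> = card {u\<in>{v<..nn}. blk (s u) = blk (s v)}"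
      by (intro arg_cong[where f=card]) auto
    finally have "psi (phi s) v = off (blk (s v)) + 1 + card {u\<in>{v<..nn}. blk (s u) = blk (s v)}"
      using True pv by (simp add: psi_def)
    then show ?thesis using sigma_formula[OF s d True] by simp
  qed
qed

lemma card_Ss_Vw: "card Ss = card Vw"
proof (rule bij_betw_same_card[of phi])
  show "bij_betw phi Ss Vw"
  proof (rule bij_betw_byWitness[where f'=psi])
    show "\<forall>a\<in>Ss. psi (phi a) = a" using psi_phi by (auto simp: Ss_def)
    show "\<forall>a\<in>Vw. phi (psi a) = a" using phi_psi by (auto simp: Vw_def)
    show "phi ` Ss \<subseteq> Vw"
    proof
      fix w assume "w \<in> phi ` Ss"
      then obtain s where s: "s \<in> Ss" "w = phi s" by blast
      have sp: "s permutes {1..nn}" "DECs s" using s by (auto simp: Ss_def)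
      have wW: "w \<in> W BL" using phi_W[OF sp(1)] s by simp
      have "psi w = s" using psi_phi[OF sp] s by simp
      then show "w \<in> Vw" using FPF_psi[OF wW] s wW by (auto simp: Ss_def Vw_def)
    qed
    show "psi ` Vw \<subseteq> Ss"
    proof
      fix s assume "s \<in> psi ` Vw"
      then obtain w where w: "w \<in> Vw" "s = psi w" by blast
      have wW: "w \<in> W BL" using w by (simp add: Vw_def)
      show "s \<in> Ss" using w psi_perm[OF wW] DECs_psi[OF wW] FPF_psi[OF wW]
        by (auto simp: Ss_def Vw_def)
    qed
  qed
qed

lemma Nblk_NWd: "Nblk L1 L2 L3 L4 = NWd BL"
proof -
  have "NWd BL = card Vw"
    unfolding NWd_def Vw_def using count_BL[of 0] count_BL[of 1] by (simp add: len_def)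
  then show ?thesis using Nblk_Sp card_Sp_Ss card_Ss_Vw by simp
qed

end


lemma BL_minus:
  "L1 > 0 \<Longrightarrow> BL L1 L2 L3 L4 - {#0#} = BL (L1 - 1) L2 L3 L4"
  "L2 > 0 \<Longrightarrow> BL L1 L2 L3 L4 - {#1#} = BL L1 (L2 - 1) L3 L4"
  "L3 > 0 \<Longrightarrow> BL L1 L2 L3 L4 - {#2#} = BL L1 L2 (L3 - 1) L4"
  "L4 > 0 \<Longrightarrow> BL L1 L2 L3 L4 - {#3#} = BL L1 L2 L3 (L4 - 1)"
  by (cases L1; cases L2; cases L3; cases L4; simp add: BL_def)+

lemma termwise_NWd:
  assumes "L3 + L4 \<ge> 1"
  shows "NWd (BL L1 L2 L3 L4) =
    (if L1 > 0 then NWd (BL (L1 - 1) L2 L3 L4) else 0) + (if L2 > 0 then NWd (BL L1 (L2 - 1) L3 L4) else 0)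
  + (if L3 > 0 then NWd (BL L1 L2 (L3 - 1) L4) else 0) + (if L4 > 0 then NWd (BL L1 L2 L3 (L4 - 1)) else 0)"
proof -
  let ?B = "BL L1 L2 L3 L4"
  have big: "count ?B 0 + count ?B 1 < size ?B"
    using assms by (auto simp: count_BL size_BL len_def nn_def)
  have sub: "set_mset ?B \<subseteq> {0,1,2,3}"
  proof
    fix x assume "x \<in> set_mset ?B"
    then have "count ?B x > 0" by simp
    then have "x \<le> 3" by (simp add: count_BL split: if_splits)
    then show "x \<in> {0,1,2,3}" by auto
  qed
  define g where "g x = (if x \<in># ?B then NWd (?B - {#x#}) else 0)" for x
  have "NWd ?B = (\<Sum>x\<in>set_mset ?B. NWd (?B - {#x#}))" by (rule main_word[OF big])
  also have "\<dots> = (\<Sum>x\<in>set_mset ?B. g x)" by (simp add: g_def)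
  also have "\<dots> = (\<Sum>x\<in>{0,1,2,3}. g x)"
    by (rule sum.mono_neutral_left) (use sub in \<open>auto simp: g_def\<close>)
  also have "\<dots> = g 0 + g 1 + g 2 + g 3" by simp
  also have "\<dots> = (if L1 > 0 then NWd (BL (L1 - 1) L2 L3 L4) else 0) + (if L2 > 0 then NWd (BL L1 (L2 - 1) L3 L4) else 0)
  + (if L3 > 0 then NWd (BL L1 L2 (L3 - 1) L4) else 0) + (if L4 > 0 then NWd (BL L1 L2 L3 (L4 - 1)) else 0)"
  proof -
    have "0 \<in># ?B \<longleftrightarrow> L1 > 0" "1 \<in># ?B \<longleftrightarrow> L2 > 0" "2 \<in># ?B \<longleftrightarrow> L3 > 0" "3 \<in># ?B \<longleftrightarrow> L4 > 0"
      by (simp_all add: BL_def)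
    then show ?thesis unfolding g_def using BL_minus by presburger
  qed
  finally show ?thesis .
qed

lemma termwise_Nblk:
  assumes "L3 + L4 \<ge> 1"
  shows "Nblk L1 L2 L3 L4 =
    (if L1 > 0 then Nblk (L1 - 1) L2 L3 L4 else 0) + (if L2 > 0 then Nblk L1 (L2 - 1) L3 L4 else 0)
  + (if L3 > 0 then Nblk L1 L2 (L3 - 1) L4 else 0) + (if L4 > 0 then Nblk L1 L2 L3 (L4 - 1) else 0)"
  using termwise_NWd[OF assms] by (simp add: Nblk_NWd)



definition Nt :: "nat \<Rightarrow> nat \<Rightarrow> nat \<Rightarrow> nat \<Rightarrow> nat" where
  "Nt L1 L2 L3 L4 = (if L1 > 0 then Nblk (L1-1) L2 L3 L4 else 0) + (if L2 > 0 then Nblk L1 (L2-1) L3 L4 else 0)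
     + (if L3 > 0 then Nblk L1 L2 (L3-1) L4 else 0) + (if L4 > 0 then Nblk L1 L2 L3 (L4-1) else 0)"

definition Iset :: "int \<Rightarrow> int \<Rightarrow> int \<Rightarrow> int set" where
  "Iset a1 a2 s = {m::int. 0 \<le> a1 - m \<and> 0 \<le> a2 - (s - m) \<and> 0 \<le> m \<and> 0 \<le> s - m}"

lemma finite_Iset: "finite (Iset a1 a2 s)"
  by (rule finite_subset[of _ "{0..s}"]) (auto simp: Iset_def)

lemma G_Iset: "G a1 a2 s = (\<Sum>m\<in>Iset a1 a2 s. Nblk (nat (a1 - m)) (nat (a2 - (s - m))) (nat m) (nat (s - m)))"
  by (simp add: G_def Iset_def)

lemma G_rec_from_termwise:
  assumes tw: "\<And>L1 L2 L3 L4. L3 + L4 \<ge> 1 \<Longrightarrow> Nblk L1 L2 L3 L4 = Nt L1 L2 L3 L4"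
    and s: "s \<ge> 1"
  shows "G a1 a2 s = G (a1 - 1) a2 s + G (a1 - 1) a2 (s - 1) + G a1 (a2 - 1) s + G a1 (a2 - 1) (s - 1)"
proof -
  let ?I = "Iset a1 a2 s"
  let ?f = "\<lambda>m. Nblk (nat (a1 - m)) (nat (a2 - (s - m))) (nat m) (nat (s - m))"
  define t1 where "t1 m = (if nat (a1 - m) > 0 then Nblk (nat (a1 - m) - 1) (nat (a2 - (s - m))) (nat m) (nat (s - m)) else 0)" for m
  define t2 where "t2 m = (if nat (a2 - (s - m)) > 0 then Nblk (nat (a1 - m)) (nat (a2 - (s - m)) - 1) (nat m) (nat (s - m)) else 0)" for m
  define t3 where "t3 m = (if nat m > 0 then Nblk (nat (a1 - m)) (nat (a2 - (s - m))) (nat m - 1) (nat (s - m)) else 0)" for m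
  define t4 where "t4 m = (if nat (s - m) > 0 then Nblk (nat (a1 - m)) (nat (a2 - (s - m))) (nat m) (nat (s - m) - 1) else 0)" for m
  have "G a1 a2 s = (\<Sum>m\<in>?I. ?f m)" by (rule G_Iset)
  also have "\<dots> = (\<Sum>m\<in>?I. t1 m + t2 m + t3 m + t4 m)"
  proof (intro sum.cong refl)
    fix m assume m: "m \<in> ?I"
    have "nat m + nat (s - m) \<ge> 1" using m s by (auto simp: Iset_def)
    then show "?f m = t1 m + t2 m + t3 m + t4 m"
      using tw by (simp add: Nt_def t1_def t2_def t3_def t4_def)
  qed
  also have "\<dots> = (\<Sum>m\<in>?I. t1 m) + (\<Sum>m\<in>?I. t3 m) + (\<Sum>m\<in>?I. t2 m) + (\<Sum>m\<in>?I. t4 m)"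
    by (simp add: sum.distrib)
  also have "(\<Sum>m\<in>?I. t1 m) = G (a1 - 1) a2 s"
  proof -
    have "G (a1 - 1) a2 s = (\<Sum>m\<in>Iset (a1 - 1) a2 s. Nblk (nat (a1 - 1 - m)) (nat (a2 - (s - m))) (nat m) (nat (s - m)))"
      by (rule G_Iset)
    also have "\<dots> = (\<Sum>m\<in>Iset (a1 - 1) a2 s. t1 m)"
      by (intro sum.cong refl) (auto simp: t1_def Iset_def nat_diff_distrib)
    also have "\<dots> = (\<Sum>m\<in>?I. t1 m)"
      by (rule sum.mono_neutral_left) (auto simp: finite_Iset Iset_def t1_def)
    finally show ?thesis by simp
  qed
  also have "(\<Sum>m\<in>?I. t2 m) = G a1 (a2 - 1) s"
  proof -
    have "G a1 (a2 - 1) s = (\<Sum>m\<in>Iset a1 (a2 - 1) s. Nblk (nat (a1 - m)) (nat (a2 - 1 - (s - m))) (nat m) (nat (s - m)))"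
      by (rule G_Iset)
    also have "\<dots> = (\<Sum>m\<in>Iset a1 (a2 - 1) s. t2 m)"
      by (intro sum.cong refl) (auto simp: t2_def Iset_def nat_diff_distrib)
    also have "\<dots> = (\<Sum>m\<in>?I. t2 m)"
      by (rule sum.mono_neutral_left) (auto simp: finite_Iset Iset_def t2_def)
    finally show ?thesis by simp
  qed
  also have "(\<Sum>m\<in>?I. t4 m) = G a1 (a2 - 1) (s - 1)"
  proof -
    have "G a1 (a2 - 1) (s - 1) = (\<Sum>m\<in>Iset a1 (a2 - 1) (s - 1). Nblk (nat (a1 - m)) (nat (a2 - 1 - (s - 1 - m))) (nat m) (nat (s - 1 - m)))"
      by (rule G_Iset)
    also have "\<dots> = (\<Sum>m\<in>Iset a1 (a2 - 1) (s - 1). t4 m)"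
    proof (intro sum.cong refl)
      fix m assume m: "m \<in> Iset a1 (a2 - 1) (s - 1)"
      have e: "a2 - 1 - (s - 1 - m) = a2 - (s - m)" by simp
      have "nat (s - 1 - m) = nat (s - m) - 1" using m by (simp add: Iset_def nat_diff_distrib)
      then show "Nblk (nat (a1 - m)) (nat (a2 - 1 - (s - 1 - m))) (nat m) (nat (s - 1 - m)) = t4 m"
        using m e by (auto simp: t4_def Iset_def) (simp add: algebra_simps)
    qed
    also have "\<dots> = (\<Sum>m\<in>?I. t4 m)"
      by (rule sum.mono_neutral_left) (auto simp: finite_Iset Iset_def t4_def)
    finally show ?thesis by simp
  qed
  also have "(\<Sum>m\<in>?I. t3 m) = G (a1 - 1) a2 (s - 1)"
  proof -
    have "G (a1 - 1) a2 (s - 1) = (\<Sum>m\<in>Iset (a1 - 1) a2 (s - 1). Nblk (nat (a1 - 1 - m)) (nat (a2 - (s - 1 - m))) (nat m) (nat (s - 1 - m)))"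
      by (rule G_Iset)
    also have "\<dots> = (\<Sum>m\<in>{m\<in>?I. m \<ge> 1}. t3 m)"
    proof (rule sum.reindex_bij_witness[of _ "\<lambda>m. m - 1" "\<lambda>m. m + 1"])
      fix a assume "a \<in> Iset (a1 - 1) a2 (s - 1)"
      then show "a + 1 - 1 = a" by simp
    next
      fix a assume "a \<in> Iset (a1 - 1) a2 (s - 1)"
      then show "a + 1 \<in> {m\<in>?I. m \<ge> 1}" by (auto simp: Iset_def)
    next
      fix b assume "b \<in> {m\<in>?I. m \<ge> 1}"
      then show "b - 1 + 1 = b" by simp
    next
      fix b assume "b \<in> {m\<in>?I. m \<ge> 1}"
      then show "b - 1 \<in> Iset (a1 - 1) a2 (s - 1)" by (auto simp: Iset_def)
    next
      fix a assume a: "a \<in> Iset (a1 - 1) a2 (s - 1)"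
      have e1: "nat (a1 - (a + 1)) = nat (a1 - 1 - a)" "nat (a2 - (s - (a + 1))) = nat (a2 - (s - 1 - a))"
        "nat (s - (a + 1)) = nat (s - 1 - a)" by (simp_all add: algebra_simps)
      have "nat (a + 1) - 1 = nat a" "nat (a + 1) > 0" using a by (auto simp: Iset_def nat_add_distrib)
      then show "t3 (a + 1) = Nblk (nat (a1 - 1 - a)) (nat (a2 - (s - 1 - a))) (nat a) (nat (s - 1 - a))"
        unfolding t3_def using e1 by simp
    qed
    also have "\<dots> = (\<Sum>m\<in>?I. t3 m)"
      by (rule sum.mono_neutral_left) (auto simp: finite_Iset Iset_def t3_def)
    finally show ?thesis by simp
  qed
  finally show ?thesis by simp
qed


theorem mainTheorem16:
  fixes a1 a2 s :: int
  assumes "a1 \<ge> 1" and "a2 \<ge> 0" and "s \<ge> 1"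
  shows "G a1 a2 s = G (a1 - 1) a2 s + G (a1 - 1) a2 (s - 1) + G a1 (a2 - 1) s + G a1 (a2 - 1) (s - 1)"
  by (rule G_rec_from_termwise[OF _ assms(3)]) (simp add: Nt_def termwise_Nblk)

end
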